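(* Let $U=\begin{pmatrix} a & b\\ c & d\end{pmatrix}$ be a $2\times 2$ unitary matrix with $abcd\neq 0$. Let $\Phi=\{{}^t[\alpha,\beta]\in\mathbf{C}^2:|\alpha|^2+|\beta|^2=1\}$ and define $$\Phi_s=\{\varphi\in\Phi: P(X_n^{\varphi}=k)=P(X_n^{\varphi}=-k)\text{ for all } n\in\mathbf{Z}_+,\ k\in\mathbf{Z}\},$$ $$\Phi_0=\{\varphi\in\Phi: E(X_n^{\varphi})=0\text{ for all } n\in\mathbf{Z}_+\},$$ $$\Phi_{\perp}=\{\varphi={}^t[\alpha,\beta]\in\Phi: |\alpha|=|\beta|,\ a\alpha\overline{b\beta}+\overline{a\alpha}b\beta=0\}.$$ Then $\Phi_s=\Phi_0=\Phi_{\perp}$.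
   Context: $\mathbf{Z}_+$ denotes the non-negative integers. Quantum random walk on $\mathbf{Z}$ determined by $U$: set $P=\begin{pmatrix} a & b\\ 0&0\end{pmatrix}$, $Q=\begin{pmatrix} 0&0\\ c & d\end{pmatrix}$. For $\varphi\in\Phi$, define amplitudes $\Psi_k(n)\in\mathbf{C}^2$ by $\Psi_0(0)=\varphi$, $\Psi_k(0)=0$ for $k\neq0$, and $\Psi_k(n+1)=P\Psi_{k+1}(n)+Q\Psi_{k-1}(n)$; $X_n^{\varphi}$ takes value $k$ with probability $P(X_n^{\varphi}=k)=\|\Psi_k(n)\|^2$. $\overline{z}$ denotes complex conjugate. *)

theory Defs
  imports Complex_Main
begin

definition unitary2 :: "complex \<Rightarrow> complex \<Rightarrow> complex \<Rightarrow> complex \<Rightarrow> bool" where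
  "unitary2 a b c d \<longleftrightarrow>
     a * cnj a + b * cnj b = 1 \<and> a * cnj c + b * cnj d = 0 \<and>
     c * cnj a + d * cnj b = 0 \<and> c * cnj c + d * cnj d = 1"

definition Pmat :: "complex \<Rightarrow> complex \<Rightarrow> complex \<times> complex \<Rightarrow> complex \<times> complex" where
  "Pmat a b v = (a * fst v + b * snd v, 0)"

definition Qmat :: "complex \<Rightarrow> complex \<Rightarrow> complex \<times> complex \<Rightarrow> complex \<times> complex" where
  "Qmat c d v = (0, c * fst v + d * snd v)"

fun qw_amp :: "complex \<Rightarrow> complex \<Rightarrow> complex \<Rightarrow> complex \<Rightarrow> complex \<times> complex \<Rightarrow> nat \<Rightarrow> int \<Rightarrow> complex \<times> complex" where
  "qw_amp a b c d phi 0 k = (if k = 0 then phi else (0, 0))"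
| "qw_amp a b c d phi (Suc n) k =
     (let u = Pmat a b (qw_amp a b c d phi n (k + 1));
          v = Qmat c d (qw_amp a b c d phi n (k - 1))
      in (fst u + fst v, snd u + snd v))"

definition qw_prob :: "complex \<Rightarrow> complex \<Rightarrow> complex \<Rightarrow> complex \<Rightarrow> complex \<times> complex \<Rightarrow> nat \<Rightarrow> int \<Rightarrow> real" where
  "qw_prob a b c d phi n k =
     (cmod (fst (qw_amp a b c d phi n k)))\<^sup>2 + (cmod (snd (qw_amp a b c d phi n k)))\<^sup>2"

text \<open>E(X_n^phi) = sum_k k P(X_n^phi = k); X_n^phi is supported in [-n, n].\<close>
definition qw_mean :: "complex \<Rightarrow> complex \<Rightarrow> complex \<Rightarrow> complex \<Rightarrow> complex \<times> complex \<Rightarrow> nat \<Rightarrow> real" where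
  "qw_mean a b c d phi n = (\<Sum>k\<in>{- int n .. int n}. real_of_int k * qw_prob a b c d phi n k)"

definition Phi :: "(complex \<times> complex) set" where
  "Phi = {phi. (cmod (fst phi))\<^sup>2 + (cmod (snd phi))\<^sup>2 = 1}"

definition Phi_s :: "complex \<Rightarrow> complex \<Rightarrow> complex \<Rightarrow> complex \<Rightarrow> (complex \<times> complex) set" where
  "Phi_s a b c d = {phi \<in> Phi. \<forall>n k. qw_prob a b c d phi n k = qw_prob a b c d phi n (- k)}"

definition Phi_0 :: "complex \<Rightarrow> complex \<Rightarrow> complex \<Rightarrow> complex \<Rightarrow> (complex \<times> complex) set" where
  "Phi_0 a b c d = {phi \<in> Phi. \<forall>n. qw_mean a b c d phi n = 0}"

definition Phi_perp :: "complex \<Rightarrow> complex \<Rightarrow> complex \<Rightarrow> complex \<Rightarrow> (complex \<times> complex) set" where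
  "Phi_perp a b c d = {phi \<in> Phi. let \<alpha> = fst phi; \<beta> = snd phi in
      cmod \<alpha> = cmod \<beta> \<and> a * \<alpha> * cnj (b * \<beta>) + cnj (a * \<alpha>) * b * \<beta> = 0}"

end

theory Submission
  imports Defs
begin


lemma sym_amp:
  fixes a b c d l r w :: complex
  assumes ld: "l * d = a" and br: "b * r = l * c" and l0: "l \<noteq> 0"
    and ph: "phi = (w * snd phi, w * r * fst phi)"
  shows "qw_amp a b c d phi n (-k) =
     (w * l powi k * snd (qw_amp a b c d phi n k), w * l powi k * r * fst (qw_amp a b c d phi n k))"
proof (induction n arbitrary: k)
  case 0
  then show ?case using ph by (cases "k = 0") auto
next
  case (Suc n)
  have e1: "- k + 1 = - (k - 1)" "- k - 1 = - (k + 1)" by auto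
  have p1: "l powi (k+1) = l powi k * l" using l0 by (simp add: power_int_add_1)
  have p2: "l powi k = l powi (k - 1) * l" using l0 power_int_minus_mult[of l k] by simp
  obtain x1 y1 where xy1: "qw_amp a b c d phi n (k - 1) = (x1, y1)" by fastforce
  obtain x2 y2 where xy2: "qw_amp a b c d phi n (k + 1) = (x2, y2)" by fastforce
  define s where "s = l powi (k - 1)"
  have p1': "l powi (k+1) = s * l * l" unfolding s_def using p1 p2 by simp
  have k1: "b * (w * s * r * x1) = w * s * l * c * x1"
  proof -
    have "b * (w * s * r * x1) = (b * r) * (w * s * x1)" by (simp add: ac_simps)
    also have "... = w * s * l * c * x1" by (simp add: br ac_simps)
    finally show ?thesis .
  qed
  have k2: "d * (w * (s * l * l) * r * x2) = w * (s * l) * r * a * x2"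
  proof -
    have "d * (w * (s * l * l) * r * x2) = (l * d) * (w * (s * l) * r * x2)" by (simp add: ac_simps)
    also have "... = w * (s * l) * r * a * x2" using ld by (simp add: ac_simps)
    finally show ?thesis .
  qed
  have k3: "c * (w * (s * l * l) * y2) = w * (s * l) * r * b * y2"
  proof -
    have "c * (w * (s * l * l) * y2) = (l * c) * (w * (s * l) * y2)" by (simp add: ac_simps)
    also have "... = w * (s * l) * r * b * y2" using br by (simp add: ac_simps)
    finally show ?thesis .
  qed
  have k4: "a * (w * s * y1) = w * s * l * d * y1" by (simp add: ld[symmetric] ac_simps)
  show ?case
    apply (simp only: qw_amp.simps Let_def Pmat_def Qmat_def e1 Suc.IH xy1 xy2 p1' p2 fst_conv snd_conv flip: s_def)
    apply (simp only: k1 k2 k3 k4)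
    apply (simp add: algebra_simps)
    done
qed

lemma sym_prob:
  fixes a b c d l r w :: complex
  assumes ld: "l * d = a" and br: "b * r = l * c" and l0: "l \<noteq> 0"
    and ph: "phi = (w * snd phi, w * r * fst phi)"
    and nl: "cmod l = 1" and nr: "cmod r = 1" and nw: "cmod w = 1"
  shows "qw_prob a b c d phi n (-k) = qw_prob a b c d phi n k"
  unfolding qw_prob_def sym_amp[OF ld br l0 ph]
  by (simp add: norm_mult norm_power_int nl nr nw)

lemma m1: "qw_mean a b c d (x,y) 1 = (cmod (c*x+d*y))^2 - (cmod (a*x+b*y))^2"
proof -
  have "{- int 1..int 1} = {-1,0,1}" by auto
  then show ?thesis unfolding qw_mean_def qw_prob_def by (simp add: Pmat_def Qmat_def)
qed

lemma m3: "qw_mean a b c d (x,y) 3 = 3*(cmod (d*d*(c*x+d*y)))^2 + (cmod (b*d*(c*x+d*y)))^2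
     + (cmod (c*b*(c*x+d*y) + d*c*(a*x+b*y)))^2
     - (cmod (a*b*(c*x+d*y) + b*c*(a*x+b*y)))^2
     - (cmod (c*a*(a*x+b*y)))^2 - 3*(cmod (a*a*(a*x+b*y)))^2"
proof -
  have "{- int 3..int 3} = {-3,-2,-1,0,1,2,3}" by auto
  then show ?thesis unfolding qw_mean_def qw_prob_def 
    by (simp add: Pmat_def Qmat_def numeral_eq_Suc power2_eq_square algebra_simps)
qed


lemma algU: fixes a b c d ac bc cc dc :: complex
  assumes u1: "a*ac + b*bc = 1" and u2: "a*cc + b*dc = 0" and u2': "ac*c + bc*d = 0" and u4: "c*cc + d*dc = 1"
  shows "d*dc = a*ac \<and> c*cc = b*bc"
  using assms by algebra
lemma algCol: fixes a b c d ac bc cc dc :: complex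
  assumes u1: "a*ac + b*bc = 1" and u2: "a*cc + b*dc = 0" and u2': "ac*c + bc*d = 0" and u4: "c*cc + d*dc = 1"
  shows "a*(ac*b + cc*d) = 0"
  using assms by algebra
lemma algE: fixes a b c d ac bc cc dc x y xc yc :: complex
  assumes u2': "ac*c + bc*d = 0" and h: "a*x*(bc*yc) + ac*xc*b*y = 0" and n: "x*xc = y*yc"
  shows "x*xc*ac*(x*x*a*c - y*y*b*d) = 0"
  using assms by algebra
lemma algB: fixes a b c d x y ac bc cc dc xc yc :: complex
  assumes u1: "a*ac + b*bc = 1" and u2: "a*cc + b*dc = 0" and u2': "ac*c + bc*d = 0"
   and dd: "d*dc = a*ac" and ccf: "c*cc = b*bc"
   and hN: "(a*x+b*y)*(ac*xc+bc*yc) = (c*x+d*y)*(cc*xc+dc*yc)"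
   and m3: "3*(d*d*(c*x+d*y))*(dc*dc*(cc*xc+dc*yc)) + (b*d*(c*x+d*y))*(bc*dc*(cc*xc+dc*yc))
     + (c*b*(c*x+d*y) + d*c*(a*x+b*y))*(cc*bc*(cc*xc+dc*yc) + dc*cc*(ac*xc+bc*yc))
     - (a*b*(c*x+d*y) + b*c*(a*x+b*y))*(ac*bc*(cc*xc+dc*yc) + bc*cc*(ac*xc+bc*yc))
     - (c*a*(a*x+b*y))*(cc*ac*(ac*xc+bc*yc)) - 3*(a*a*(a*x+b*y))*(ac*ac*(ac*xc+bc*yc)) = 0"
  shows "c*cc*(a*cc*(c*x+d*y)*(ac*xc+bc*yc) + ac*c*(cc*xc+dc*yc)*(a*x+b*y)) = 0"
  using assms by algebra
lemma algC: fixes a b c d x y ac bc cc dc xc yc :: complex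
  assumes u1: "a*ac + b*bc = 1" and u2: "a*cc + b*dc = 0" and u2': "ac*c + bc*d = 0"
   and dd: "d*dc = a*ac" and ccf: "c*cc = b*bc" and col: "ac*b + cc*d = 0" and col': "a*bc + c*dc = 0"
   and hX: "a*cc*(c*x+d*y)*(ac*xc+bc*yc) + ac*c*(cc*xc+dc*yc)*(a*x+b*y) = 0"
   and hN: "(a*x+b*y)*(ac*xc+bc*yc) = (c*x+d*y)*(cc*xc+dc*yc)"
  shows "x*xc = y*yc \<and> a*x*(bc*yc) + ac*xc*b*y = 0"
  using assms by algebra

lemma csq: "complex_of_real ((cmod z)^2) = z * cnj z"
  by (rule complex_norm_square)

lemma cmod_eq_of_sq: "z * cnj z = w * cnj w \<Longrightarrow> cmod z = cmod w"
proof -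
  assume "z * cnj z = w * cnj w"
  then have "complex_of_real ((cmod z)^2) = complex_of_real ((cmod w)^2)" unfolding csq .
  then have "(cmod z)^2 = (cmod w)^2" using of_real_eq_iff by blast
  then show ?thesis by (simp add: power2_eq_iff_nonneg)
qed

theorem theorem4:
  fixes a b c d :: complex
  assumes "unitary2 a b c d"
    and "a * b * c * d \<noteq> 0"
  shows "Phi_s a b c d = Phi_0 a b c d \<and> Phi_0 a b c d = Phi_perp a b c d"
proof -
  have u1: "a * cnj a + b * cnj b = 1" and u2: "a * cnj c + b * cnj d = 0"
    and u3: "c * cnj a + d * cnj b = 0" and u4: "c * cnj c + d * cnj d = 1"
    using assms(1) unfolding unitary2_def by auto
  have u2': "cnj a * c + cnj b * d = 0"
  proof -
    have "cnj (a * cnj c + b * cnj d) = 0" using u2 by simp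
    then show ?thesis by simp
  qed
  have nz: "a \<noteq> 0" "b \<noteq> 0" "c \<noteq> 0" "d \<noteq> 0" using assms(2) by auto
  have dd: "d * cnj d = a * cnj a" and ccf: "c * cnj c = b * cnj b"
    using algU[OF u1 u2 u2' u4] by auto
  have nda: "cmod d = cmod a" using cmod_eq_of_sq[OF dd] .
  have ncb: "cmod c = cmod b" using cmod_eq_of_sq[OF ccf] .
  have col: "cnj a * b + cnj c * d = 0" using algCol[OF u1 u2 u2' u4] nz(1) mult_eq_0_iff by blast
  have col': "a * cnj b + c * cnj d = 0"
  proof -
    have "cnj (cnj a * b + cnj c * d) = 0" using col by simp
    then show ?thesis by simp
  qed
  have s0: "Phi_s a b c d \<subseteq> Phi_0 a b c d"
  proof
    fix phi assume "phi \<in> Phi_s a b c d"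
    then have ph: "phi \<in> Phi" and sy: "\<And>n k. qw_prob a b c d phi n k = qw_prob a b c d phi n (- k)"
      unfolding Phi_s_def by auto
    have "qw_mean a b c d phi n = 0" for n
    proof -
      let ?f = "\<lambda>k. real_of_int k * qw_prob a b c d phi n k"
      have "(\<Sum>k\<in>{- int n .. int n}. ?f k) = (\<Sum>k\<in>{- int n .. int n}. ?f (- k))"
        by (rule sum.reindex_bij_witness[of _ uminus uminus]) auto
      also have "\<dots> = - (\<Sum>k\<in>{- int n .. int n}. ?f k)"
      proof -
        have "?f (- k) = - ?f k" for k using sy[of n k] by simp
        then show ?thesis by (simp only: sum_negf[symmetric])
      qed
      finally show ?thesis unfolding qw_mean_def by simp
    qed
    then show "phi \<in> Phi_0 a b c d" using ph unfolding Phi_0_def by auto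
  qed
  have s1: "Phi_0 a b c d \<subseteq> Phi_perp a b c d"
  proof
    fix phi assume "phi \<in> Phi_0 a b c d"
    then have ph: "phi \<in> Phi" and mz: "\<And>n. qw_mean a b c d phi n = 0"
      unfolding Phi_0_def by auto
    obtain x y where xy: "phi = (x, y)" by fastforce
    have e1: "(cmod (c*x+d*y))^2 - (cmod (a*x+b*y))^2 = 0" using mz[of 1] m1 xy by simp
    have hN: "(a*x+b*y)*(cnj a*cnj x+cnj b*cnj y) = (c*x+d*y)*(cnj c*cnj x+cnj d*cnj y)"
    proof -
      have "complex_of_real ((cmod (a*x+b*y))^2) = complex_of_real ((cmod (c*x+d*y))^2)"
        using e1 by simp
      then show ?thesis unfolding csq by simp
    qed
    let ?R = "3*(cmod (d*d*(c*x+d*y)))^2 + (cmod (b*d*(c*x+d*y)))^2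
     + (cmod (c*b*(c*x+d*y) + d*c*(a*x+b*y)))^2
     - (cmod (a*b*(c*x+d*y) + b*c*(a*x+b*y)))^2
     - (cmod (c*a*(a*x+b*y)))^2 - 3*(cmod (a*a*(a*x+b*y)))^2"
    have e3: "?R = 0" using mz[of 3] m3 xy by simp
    have "complex_of_real ?R = 0" using e3 by simp
    then have e3c: "3*(d*d*(c*x+d*y))*(cnj d*cnj d*(cnj c*cnj x+cnj d*cnj y)) + (b*d*(c*x+d*y))*(cnj b*cnj d*(cnj c*cnj x+cnj d*cnj y))
     + (c*b*(c*x+d*y) + d*c*(a*x+b*y))*(cnj c*cnj b*(cnj c*cnj x+cnj d*cnj y) + cnj d*cnj c*(cnj a*cnj x+cnj b*cnj y))
     - (a*b*(c*x+d*y) + b*c*(a*x+b*y))*(cnj a*cnj b*(cnj c*cnj x+cnj d*cnj y) + cnj b*cnj c*(cnj a*cnj x+cnj b*cnj y))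
     - (c*a*(a*x+b*y))*(cnj c*cnj a*(cnj a*cnj x+cnj b*cnj y)) - 3*(a*a*(a*x+b*y))*(cnj a*cnj a*(cnj a*cnj x+cnj b*cnj y)) = 0"
      by (simp only: of_real_add of_real_diff of_real_mult of_real_numeral csq complex_cnj_mult complex_cnj_add) (simp only: mult.assoc)
    note hB = algB[OF u1 u2 u2' dd ccf hN e3c]
    have ccnz: "c * cnj c \<noteq> 0" using nz by simp
    have hX: "a*cnj c*(c*x+d*y)*(cnj a*cnj x+cnj b*cnj y) + cnj a*c*(cnj c*cnj x+cnj d*cnj y)*(a*x+b*y) = 0"
      using divisors_zero[OF hB] ccnz by blast
    have hC: "x * cnj x = y * cnj y \<and> a*x*(cnj b*cnj y) + cnj a*cnj x*b*y = 0"
      using algC[OF u1 u2 u2' dd ccf col col' hX hN] .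
    have r1: "cmod x = cmod y" using cmod_eq_of_sq hC by blast
    have r2: "a * x * cnj (b * y) + cnj (a * x) * b * y = 0" using hC by (simp add: ac_simps)
    show "phi \<in> Phi_perp a b c d" using ph r1 r2 unfolding xy Phi_perp_def by simp
  qed
  have s2: "Phi_perp a b c d \<subseteq> Phi_s a b c d"
  proof
    fix phi assume "phi \<in> Phi_perp a b c d"
    then have pp: "phi \<in> Phi_perp a b c d" .
    obtain x y where xy: "phi = (x, y)" by fastforce
    have ph: "phi \<in> Phi" and nxy: "cmod x = cmod y"
      and h': "a*x*(cnj b*cnj y) + cnj a*cnj x*b*y = 0"
      using pp unfolding Phi_perp_def xy by (simp_all add: Let_def)
    have "(cmod x)^2 + (cmod y)^2 = 1" using ph xy unfolding Phi_def by simp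
    then have x0: "x \<noteq> 0" and y0: "y \<noteq> 0" using nxy by auto
    have n: "x * cnj x = y * cnj y" using nxy by (simp flip: csq)
    have "x*cnj x*cnj a*(x*x*a*c - y*y*b*d) = 0" using algE[OF u2' h' n] .
    then have key: "x*x*a*c = y*y*b*d" using x0 nz by simp
    define l where "l = a / d"
    define r where "r = a * c / (b * d)"
    define w where "w = x / y"
    have ld: "l * d = a" unfolding l_def using nz by simp
    have br: "b * r = l * c" unfolding l_def r_def using nz by simp
    have l0: "l \<noteq> 0" unfolding l_def using nz by simp
    have phe: "phi = (w * snd phi, w * r * fst phi)"
      unfolding xy w_def r_def using key x0 y0 nz by (simp add: field_simps)
    have nl: "cmod l = 1" unfolding l_def using nda nz by (simp add: norm_divide)
    have nr: "cmod r = 1" unfolding r_def using nda ncb nz by (simp add: norm_divide norm_mult)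
    have nw: "cmod w = 1" unfolding w_def using nxy y0 by (simp add: norm_divide)
    show "phi \<in> Phi_s a b c d"
      using sym_prob[OF ld br l0 phe nl nr nw] ph unfolding Phi_s_def by auto
  qed
  show ?thesis using s0 s1 s2 by blast
qed
end
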